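(* Let $Q\in\mathrm{St}(n,r)$ and $\mathcal{I}=\{(i,j):V_{ij}=0\ \text{for all } V\in T_Q\mathrm{St}(n,r)\}$. Then: (i) if $(i,j)\in\mathcal{I}$, then $Q_{ij}\in\{\pm1\}$; (ii) if $(i,j)\notin\mathcal{I}$, then the set $\mathcal{Z}_{ij}:=\{Z\in\mathbb{R}^{n\times r}:(\mathbf{P}_QZ)_{ij}=0\}$ has zero Lebesgue measure.
   Context: $\mathrm{St}(n,r)=\{Q\in\mathbb{R}^{n\times r}:Q^\top Q=I_r\}$ is the Stiefel manifold, with tangent space $T_Q\mathrm{St}(n,r)=\{V\in\mathbb{R}^{n\times r}:Q^\top V+V^\top Q=0\}$, and $\mathbf{P}_Q(Z)=Z-Q(Q^\top Z+Z^\top Q)/2$ is the orthogonal projection of $Z\in\mathbb{R}^{n\times r}$ onto $T_Q\mathrm{St}(n,r)$. *)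

theory Defs
  imports "HOL-Analysis.Analysis"
begin

text \<open>n x r real matrices are represented as real^'r^'n (rows indexed by 'n, columns by 'r).\<close>

definition stiefel :: "(real^'r^'n) set" where
  "stiefel = {Q. transpose Q ** Q = mat 1}"

definition tangent_stiefel :: "real^'r^'n \<Rightarrow> (real^'r^'n) set" where
  "tangent_stiefel Q = {V. transpose Q ** V + transpose V ** Q = 0}"

definition proj_stiefel :: "real^'r^'n \<Rightarrow> real^'r^'n \<Rightarrow> real^'r^'n" where
  "proj_stiefel Q Z = Z - Q ** ((1/2) *\<^sub>R (transpose Q ** Z + transpose Z ** Q))"

end

theory Submission
  imports Defs
begin

lemma transpose_add': "transpose (A + B) = transpose A + transpose (B::real^'a^'b)"
  by (simp add: transpose_def vec_eq_iff)
lemma transpose_diff': "transpose (A - B) = transpose A - transpose (B::real^'a^'b)"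
  by (simp add: transpose_def vec_eq_iff)
lemma matrix_sub_ldistrib': "(A::real^'a^'b) ** (B - C) = A ** B - A ** C"
  by (simp add: matrix_matrix_mult_def vec_eq_iff sum_subtractf algebra_simps)
lemma matrix_sub_rdistrib': "((B::real^'a^'b) - C) ** A = B ** A - C ** A"
  by (simp add: matrix_matrix_mult_def vec_eq_iff sum_subtractf algebra_simps)

lemma proj_tangent:
  fixes Q Z :: "real^'r^'n"
  assumes "Q \<in> stiefel"
  shows "proj_stiefel Q Z \<in> tangent_stiefel Q"
proof -
  have QQ: "transpose Q ** Q = mat 1" using assms by (simp add: stiefel_def)
  define M where "M = (1/2) *\<^sub>R (transpose Q ** Z + transpose Z ** Q)"
  have MT: "transpose M = M"
    by (simp add: M_def transpose_scalar matrix_transpose_mul transpose_add' add.commute)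
  have 1: "transpose Q ** (Z - Q ** M) = transpose Q ** Z - M"
    by (simp add: matrix_sub_ldistrib' matrix_mul_assoc QQ)
  have 2: "transpose (Z - Q ** M) ** Q = transpose Z ** Q - M"
    by (simp add: matrix_transpose_mul transpose_diff' matrix_sub_rdistrib' MT
       flip: matrix_mul_assoc add: QQ)
  have 3: "M + M = transpose Q ** Z + transpose Z ** Q"
    unfolding M_def by (simp add: scaleR_left_distrib[symmetric])
  have "transpose Q ** (Z - Q ** M) + transpose (Z - Q ** M) ** Q
       = (transpose Q ** Z + transpose Z ** Q) - (M + M)"
      unfolding 1 2 by (simp add: algebra_simps)
  then have "transpose Q ** (Z - Q ** M) + transpose (Z - Q ** M) ** Q = 0"
      unfolding 3 by simp
  then show ?thesis unfolding tangent_stiefel_def proj_stiefel_def M_def[symmetric]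
    by simp
qed

lemma skew_tangent:
  fixes Q :: "real^'r^'n"
  assumes "Q \<in> stiefel" "transpose A + A = 0"
  shows "Q ** A \<in> tangent_stiefel Q"
proof -
  have QQ: "transpose Q ** Q = mat 1" using assms by (simp add: stiefel_def)
  have "transpose A ** transpose Q ** Q = transpose A"
    by (simp flip: matrix_mul_assoc add: QQ)
  then show ?thesis unfolding tangent_stiefel_def
    by (simp add: matrix_transpose_mul matrix_mul_assoc QQ assms(2) add.commute[of A])
qed

lemma proj_fix:
  assumes "V \<in> tangent_stiefel Q"
  shows "proj_stiefel Q V = V"
  using assms by (simp add: tangent_stiefel_def proj_stiefel_def)

lemma matrix_add_rdistrib': "((B::real^'a^'b) + C) ** A = B ** A + C ** A"
  by (simp add: matrix_matrix_mult_def vec_eq_iff sum.distrib algebra_simps)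
lemma matrix_scale_r': "(A::real^'a^'b) ** (c *\<^sub>R B) = c *\<^sub>R (A ** B)"
  by (simp add: matrix_matrix_mult_def vec_eq_iff sum_distrib_left algebra_simps)
lemma matrix_scale_l': "(c *\<^sub>R (A::real^'a^'b)) ** B = c *\<^sub>R (A ** B)"
  by (simp add: matrix_matrix_mult_def vec_eq_iff sum_distrib_left algebra_simps)

lemma proj_add: "proj_stiefel Q (X + Y) = proj_stiefel Q X + proj_stiefel Q (Y::real^'r^'n)"
  unfolding proj_stiefel_def
  by (simp only: transpose_add' matrix_add_ldistrib matrix_add_rdistrib'
      scaleR_add_right) (simp add: algebra_simps)

lemma proj_scale: "proj_stiefel Q (c *\<^sub>R X) = c *\<^sub>R proj_stiefel Q (X::real^'r^'n)"

proof -
  have e: "(1 / 2) *\<^sub>R (transpose Q ** (c *\<^sub>R X) + transpose (c *\<^sub>R X) ** Q)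
     = c *\<^sub>R ((1 / 2) *\<^sub>R (transpose Q ** X + transpose X ** Q))"
    by (simp only: transpose_scalar matrix_scale_r' matrix_scale_l' scaleR_add_right
     scaleR_scaleR mult.commute[of c])
  have "proj_stiefel Q (c *\<^sub>R X) = c *\<^sub>R X - Q ** (c *\<^sub>R ((1 / 2) *\<^sub>R (transpose Q ** X + transpose X ** Q)))"
    unfolding proj_stiefel_def e ..
  also have "\<dots> = c *\<^sub>R proj_stiefel Q X"
    unfolding proj_stiefel_def matrix_scale_r' scaleR_diff_right ..
  finally show ?thesis .
qed


lemma entry_skew:
  fixes Q :: "real^'r^'n"
  assumes "k \<noteq> j"
  shows "(Q ** (\<chi> a b. if a = k \<and> b = j then 1 else if a = j \<and> b = k then -1 else 0)) $ i $ j = Q $ i $ k"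
proof -
  have "(\<chi> a b. if a = k \<and> b = j then 1 else if a = j \<and> b = k then -1 else (0::real)) $ l $ j
     = (if l = k then 1 else 0)" for l
    using assms by simp
  then have "(Q ** (\<chi> a b. if a = k \<and> b = j then 1 else if a = j \<and> b = k then -1 else 0)) $ i $ j
     = (\<Sum>l\<in>UNIV. Q$i$l * (if l = k then 1 else 0))"
    by (simp add: matrix_matrix_mult_def)
  also have "\<dots> = (\<Sum>l\<in>UNIV. if l = k then Q$i$l else 0)"
    by (rule sum.cong) auto
  also have "\<dots> = Q$i$k" by simp
  finally show ?thesis .
qed

lemma mm_entry: "((A::real^'a^'b) ** B) $ i $ j = (\<Sum>k\<in>UNIV. A$i$k * B$k$j)"
  by (simp add: matrix_matrix_mult_def)

lemma entry_E:
  fixes Q :: "real^'r^'n" and i :: 'n and j :: 'r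
  defines "E \<equiv> (\<chi> a b. if a = i \<and> b = j then 1 else 0) :: real^'r^'n"
  shows "proj_stiefel Q E $ i $ j
    = 1 - (1/2) * ((\<Sum>k\<in>UNIV. (Q$i$k)^2) + (Q$i$j)^2)"
proof -
  have a: "(transpose Q ** E) $ k $ j = Q$i$k" for k
  proof -
    have "(transpose Q ** E) $ k $ j = (\<Sum>m\<in>UNIV. Q$m$k * (if m = i then 1 else 0))"
      by (simp add: E_def matrix_matrix_mult_def transpose_def)
    also have "\<dots> = (\<Sum>m\<in>UNIV. if m = i then Q$m$k else 0)"
      by (rule sum.cong) auto
    finally show ?thesis by simp
  qed
  have b: "(transpose E ** Q) $ k $ j = (if k = j then Q$i$j else 0)" for k
  proof -
    have "(transpose E ** Q) $ k $ j = (\<Sum>m\<in>UNIV. (if m = i \<and> k = j then 1 else 0) * Q$m$j)"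
      by (simp add: E_def matrix_matrix_mult_def transpose_def)
    also have "\<dots> = (\<Sum>m\<in>UNIV. if m = i then (if k = j then Q$m$j else 0) else 0)"
      by (rule sum.cong) auto
    finally show ?thesis by simp
  qed
  have m: "((1/2) *\<^sub>R (transpose Q ** E + transpose E ** Q)) $ k $ j
      = (1/2) * (Q$i$k + (if k = j then Q$i$j else 0))" for k
    by (simp only: vector_scaleR_component vector_add_component a b real_scaleR_def)
  have "(Q ** ((1/2) *\<^sub>R (transpose Q ** E + transpose E ** Q))) $ i $ j
     = (\<Sum>k\<in>UNIV. Q$i$k * ((1/2) * (Q$i$k + (if k = j then Q$i$j else 0))))"
    by (simp only: mm_entry m)
  also have "\<dots> = (1/2) * ((\<Sum>k\<in>UNIV. (Q$i$k)^2) + (Q$i$j)^2)"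
  proof -
    have "(\<Sum>k\<in>UNIV. Q$i$k * ((1/2) * (Q$i$k + (if k = j then Q$i$j else 0))))
        = (\<Sum>k\<in>UNIV. (1/2) * (Q$i$k)^2 + (if k = j then (1/2) * (Q$i$j)^2 else 0))"
      by (rule sum.cong) (auto simp: power2_eq_square algebra_simps)
    also have "\<dots> = (1/2) * (\<Sum>k\<in>UNIV. (Q$i$k)^2) + (1/2) * (Q$i$j)^2"
      by (simp add: sum.distrib sum_distrib_left)
    finally show ?thesis by (simp add: algebra_simps)
  qed
  finally show ?thesis by (simp add: proj_stiefel_def E_def)
qed


theorem proposition4p3:
  fixes Q :: "real^'r^'n"
  assumes "Q \<in> stiefel"
  defines "\<I> \<equiv> {(i, j). \<forall>V \<in> tangent_stiefel Q. V $ i $ j = 0}"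
  shows "(\<forall>i j. (i, j) \<in> \<I> \<longrightarrow> Q $ i $ j \<in> {1, -1}) \<and>
         (\<forall>i j. (i, j) \<notin> \<I> \<longrightarrow>
           {Z :: real^'r^'n. proj_stiefel Q Z $ i $ j = 0} \<in> null_sets lebesgue)"
proof (intro conjI allI impI)
  fix i j
  assume "(i, j) \<in> \<I>"
  then have H: "\<And>V. V \<in> tangent_stiefel Q \<Longrightarrow> V $ i $ j = 0"
    by (simp add: \<I>_def)
  have z: "Q $ i $ k = 0" if "k \<noteq> j" for k
  proof -
    define A :: "real^'r^'r" where
      "A = (\<chi> a b. if a = k \<and> b = j then 1 else if a = j \<and> b = k then -1 else 0)"
    have "transpose A + A = 0"
      using that by (auto simp: A_def transpose_def vec_eq_iff)
    then have "Q ** A \<in> tangent_stiefel Q" by (rule skew_tangent[OF assms(1)])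
    then have "(Q ** A) $ i $ j = 0" by (rule H)
    then show ?thesis using entry_skew[OF that, of Q i] by (simp add: A_def)
  qed
  have "proj_stiefel Q (\<chi> a b. if a = i \<and> b = j then 1 else 0) $ i $ j = 0"
    by (rule H, rule proj_tangent[OF assms(1)])
  then have e: "1 - (1/2) * ((\<Sum>k\<in>UNIV. (Q$i$k)^2) + (Q$i$j)^2) = 0"
    by (simp only: entry_E)
  have "(\<Sum>k\<in>UNIV. (Q$i$k)^2) = (\<Sum>k\<in>UNIV. if k = j then (Q$i$j)^2 else 0)"
    by (rule sum.cong) (auto simp: z)
  also have "\<dots> = (Q$i$j)^2" by simp
  finally have "(Q$i$j)^2 = 1" using e by simp
  then show "Q $ i $ j \<in> {1, -1}" by (simp add: power2_eq_1_iff)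
next
  fix i j
  assume "(i, j) \<notin> \<I>"
  then obtain V where V: "V \<in> tangent_stiefel Q" "V $ i $ j \<noteq> 0"
    by (auto simp: \<I>_def)
  define S where "S = {Z :: real^'r^'n. proj_stiefel Q Z $ i $ j = 0}"
  have sub: "subspace S"
    unfolding subspace_def S_def
  proof (intro conjI ballI allI)
    show "0 \<in> {Z :: real^'r^'n. proj_stiefel Q Z $ i $ j = 0}"
      using proj_scale[of Q 0 0] by simp
  next
    fix x y assume "x \<in> {Z :: real^'r^'n. proj_stiefel Q Z $ i $ j = 0}"
      "y \<in> {Z :: real^'r^'n. proj_stiefel Q Z $ i $ j = 0}"
    then show "x + y \<in> {Z :: real^'r^'n. proj_stiefel Q Z $ i $ j = 0}"
      by (simp add: proj_add)
  next
    fix c x assume "x \<in> {Z :: real^'r^'n. proj_stiefel Q Z $ i $ j = 0}"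
    then show "c *\<^sub>R x \<in> {Z :: real^'r^'n. proj_stiefel Q Z $ i $ j = 0}"
      by (simp add: proj_scale)
  qed
  have "V \<notin> S" using V by (simp add: S_def proj_fix)
  then have "span S \<noteq> UNIV" using sub by (metis UNIV_I span_eq_iff)
  then have "dim S \<noteq> DIM(real^'r^'n)" using dim_eq_full by blast
  moreover have "dim S \<le> DIM(real^'r^'n)" by (rule dim_subset_UNIV)
  ultimately have "dim S < DIM(real^'r^'n)" by simp
  then have "negligible S" by (rule negligible_lowdim)
  then show "{Z :: real^'r^'n. proj_stiefel Q Z $ i $ j = 0} \<in> null_sets lebesgue"
    by (simp add: S_def negligible_iff_null_sets)
qed

end
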